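(* Let $X\subseteq\mathbb{P}^n$ be a real non-degenerate closed subscheme and let $p\geq 1$ be an integer. If $X$ satisfies the $p$-base-point-free property, then the Hankel index satisfies $\eta(X)\geq p+1$.
   Context: Let $S=\mathbb{R}[x_0,\dots,x_n]$, $S_d$ its degree-$d$ part. For a closed subscheme $X\subseteq\mathbb{P}^n$ over $\mathbb{R}$ (points taken over $\mathbb{C}$, real points $X(\mathbb{R})$), $I=I(X)\subseteq S$ is its saturated homogeneous ideal and $R=S/I$ its homogeneous coordinate ring. $X$ is non-degenerate if it is not contained in a hyperplane. $\Sigma_X\subseteq R_2$ is the cone of sums of squares of elements of $R_1$ and $\Sigma_X^*\subseteq R_2^*$ its dual cone, regarded inside $S_2^*$ via the dual of the quotient map $S_2\to R_2$. For $\ell\in S_2^*$ let $B_\ell$ be the symmetric bilinear form $(f,g)\mapsto \ell(fg)$ on $S_1$; the rank of $\ell$ is the rank of $B_\ell$. With $S_+$ the cone of $\ell\in S_2^*$ with $B_\ell$ positive semidefinite, $\Sigma_X^*=S_+\cap I_2^\perp$ (the Hankel spectrahedron of $X$). The rank of an extreme ray is the rank of any nonzero element spanning it. The Hankel index $\eta(X)$ is the smallest integer $p>1$ such that $\Sigma_X^*$ has an extreme ray of rank $p$; $\eta(X)=\infty$ if all extreme rays of $\Sigma_X^*$ have rank $1$. A linear series is a vector subspace $W\subseteq R_1$; it is base-point-free on $X$ if the forms in $W$ have no common zero on $X$ (over $\mathbb{C}$). $X$ satisfies the $p$-base-point-free property if for every base-point-free linear series $W\subseteq R_1$ of codimension at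 most $p$ in $R_1$, the ideal of $R$ generated by $W$ contains $R_2$. *)

theory Defs
  imports "HOL-Analysis.Analysis" "HOL-Library.Poly_Mapping" "HOL-Library.Extended_Nat"
begin

text \<open>Polynomials with real coefficients in the variables indexed by the finite type 'n
  (so CARD('n) = n+1 and the ambient space is P^n).\<close>

type_synonym 'n mpoly = "('n \<Rightarrow>\<^sub>0 nat) \<Rightarrow>\<^sub>0 real"

definition mon_deg :: "('n::finite \<Rightarrow>\<^sub>0 nat) \<Rightarrow> nat" where
  "mon_deg m = (\<Sum>i\<in>UNIV. Poly_Mapping.lookup m i)"

text \<open>f is homogeneous of degree d (0 counts as homogeneous of every degree); S_d = {f. hom_deg d f}.\<close>
definition hom_deg :: "nat \<Rightarrow> 'n::finite mpoly \<Rightarrow> bool" where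
  "hom_deg d f \<longleftrightarrow> (\<forall>m \<in> Poly_Mapping.keys f. mon_deg m = d)"

definition var :: "'n \<Rightarrow> 'n mpoly" where
  "var i = Poly_Mapping.single (Poly_Mapping.single i 1) 1"

definition lin :: "real^'n::finite \<Rightarrow> 'n mpoly" where
  "lin a = (\<Sum>i\<in>UNIV. Poly_Mapping.single (Poly_Mapping.single i 1) (a $ i))"

definition ideal_gen :: "'n mpoly set \<Rightarrow> 'n mpoly set" where
  "ideal_gen A = {f. \<exists>F c. finite F \<and> F \<subseteq> A \<and> f = (\<Sum>a\<in>F. c a * a)}"

definition homogeneous_ideal :: "'n::finite mpoly set \<Rightarrow> bool" where
  "homogeneous_ideal I \<longleftrightarrow> I = ideal_gen (I \<inter> {f. \<exists>d. hom_deg d f})"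

text \<open>Saturation with respect to the irrelevant ideal m = (x_0,...,x_n): (I : m^\<infinity>) = I.\<close>
definition saturated :: "'n::finite mpoly set \<Rightarrow> bool" where
  "saturated I \<longleftrightarrow> (\<forall>f. (\<exists>k. \<forall>g. hom_deg k g \<longrightarrow> g * f \<in> I) \<longrightarrow> f \<in> I)"

definition ceval :: "'n::finite mpoly \<Rightarrow> ('n \<Rightarrow> complex) \<Rightarrow> complex" where
  "ceval f z = (\<Sum>m\<in>Poly_Mapping.keys f. complex_of_real (Poly_Mapping.lookup f m) * (\<Prod>i\<in>UNIV. z i ^ Poly_Mapping.lookup m i))"

text \<open>Complex points of X = V(I), given by nonzero affine representatives.\<close>
definition cpoints :: "'n::finite mpoly set \<Rightarrow> ('n \<Rightarrow> complex) set" where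
  "cpoints I = {z. z \<noteq> (\<lambda>_. 0) \<and> (\<forall>f\<in>I. ceval f z = 0)}"

text \<open>X is not contained (scheme-theoretically) in any hyperplane: no nonzero linear form lies in I(X).\<close>
definition nondegenerate :: "'n::finite mpoly set \<Rightarrow> bool" where
  "nondegenerate I \<longleftrightarrow> (\<forall>a. a \<noteq> 0 \<longrightarrow> lin a \<notin> I)"

text \<open>Since X is non-degenerate, R_1 = S_1, identified with real^'n via lin;
  a linear series is a subspace W, of codimension CARD('n) - dim W. The ideal of R generated by W
  contains R_2 iff every f in S_2 lies in the ideal of S generated by W and I.\<close>
definition base_point_free :: "'n::finite mpoly set \<Rightarrow> (real^'n) set \<Rightarrow> bool" where
  "base_point_free I W \<longleftrightarrow> \<not> (\<exists>z\<in>cpoints I. \<forall>a\<in>W. ceval (lin a) z = 0)"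

definition p_bpf :: "nat \<Rightarrow> 'n::finite mpoly set \<Rightarrow> bool" where
  "p_bpf p I \<longleftrightarrow> (\<forall>W. subspace W \<and> CARD('n) - dim W \<le> p \<and> base_point_free I W \<longrightarrow>
      (\<forall>f. hom_deg 2 f \<longrightarrow> f \<in> ideal_gen (lin ` W \<union> I)))"

text \<open>Elements of S_2^*: functions linear on S_2 and vanishing outside S_2 (canonical representatives).\<close>
definition dual2 :: "('n::finite mpoly \<Rightarrow> real) \<Rightarrow> bool" where
  "dual2 L \<longleftrightarrow> (\<forall>f g. hom_deg 2 f \<longrightarrow> hom_deg 2 g \<longrightarrow> L (f + g) = L f + L g)
     \<and> (\<forall>c f. hom_deg 2 f \<longrightarrow> L (Poly_Mapping.single 0 c * f) = c * L f)
     \<and> (\<forall>f. \<not> hom_deg 2 f \<longrightarrow> L f = 0)"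

text \<open>Hankel spectrahedron Sigma_X^* = S_+ \<inter> I_2^\<perp>; B_L(f,f) = L(f^2) >= 0 for f in S_1.\<close>
definition hankel_cone :: "'n::finite mpoly set \<Rightarrow> ('n mpoly \<Rightarrow> real) set" where
  "hankel_cone I = {L. dual2 L \<and> (\<forall>a. L (lin a * lin a) \<ge> 0) \<and> (\<forall>q\<in>I. hom_deg 2 q \<longrightarrow> L q = 0)}"

definition extreme_ray :: "('a \<Rightarrow> real) set \<Rightarrow> ('a \<Rightarrow> real) \<Rightarrow> bool" where
  "extreme_ray K L \<longleftrightarrow> L \<in> K \<and> L \<noteq> (\<lambda>_. 0) \<and>
     (\<forall>L1 L2. L1 \<in> K \<and> L2 \<in> K \<and> L = (\<lambda>x. L1 x + L2 x) \<longrightarrow> (\<exists>c\<ge>0. L1 = (\<lambda>x. c * L x)))"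

text \<open>Gram matrix of B_L in the basis x_0..x_n; rank of L = rank of B_L.\<close>
definition gram :: "('n::finite mpoly \<Rightarrow> real) \<Rightarrow> real^'n^'n" where
  "gram L = (\<chi> i j. L (var i * var j))"

definition hank_rank :: "('n::finite mpoly \<Rightarrow> real) \<Rightarrow> nat" where
  "hank_rank L = rank (gram L)"

definition hankel_index :: "'n::finite mpoly set \<Rightarrow> enat" where
  "hankel_index I =
     (if \<exists>L. extreme_ray (hankel_cone I) L \<and> hank_rank L > 1
      then enat (LEAST r. r > 1 \<and> (\<exists>L. extreme_ray (hankel_cone I) L \<and> hank_rank L = r))
      else \<infinity>)"

end

theory Submission
  imports Defs
begin

lemma mon_deg_add: "mon_deg (a + b) = mon_deg a + mon_deg b"
  by (simp add: mon_deg_def lookup_add sum.distrib)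

lemma mon_deg_single: "mon_deg (Poly_Mapping.single (i::'n::finite) (k::nat)) = k"
  unfolding mon_deg_def by (simp add: lookup_single when_def)

lemma mon_deg_zero: "mon_deg (0::'n::finite \<Rightarrow>\<^sub>0 nat) = 0"
  unfolding mon_deg_def by simp

lemma hom_deg_0[simp]: "hom_deg d 0"
  by (simp add: hom_deg_def)

lemma hom_deg_add: "hom_deg d f \<Longrightarrow> hom_deg d g \<Longrightarrow> hom_deg d (f + g)"
  unfolding hom_deg_def using keys_add[of f g] by blast

lemma hom_deg_sum: "finite A \<Longrightarrow> (\<And>x. x \<in> A \<Longrightarrow> hom_deg d (f x)) \<Longrightarrow> hom_deg d (sum f A)"
  by (induction A rule: finite_induct) (auto intro: hom_deg_add)

lemma hom_deg_single: "mon_deg m = d \<Longrightarrow> hom_deg d (Poly_Mapping.single m c)"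
  unfolding hom_deg_def by auto

lemma hom_deg_mult: "hom_deg a f \<Longrightarrow> hom_deg b g \<Longrightarrow> hom_deg (a + b) (f * g)"
  unfolding hom_deg_def using keys_mult[of f g] by (force simp: mon_deg_add)

lemma hom_deg_scal: "hom_deg d f \<Longrightarrow> hom_deg d (Poly_Mapping.single 0 c * f)"
  using hom_deg_mult[OF hom_deg_single[OF mon_deg_zero], of d f c] by simp

lemma hom_deg_var: "hom_deg 1 (var i)"
  unfolding var_def by (rule hom_deg_single) (simp add: mon_deg_single)

lemma hom_deg_var2: "hom_deg 2 (var i * var j)"
  using hom_deg_mult[OF hom_deg_var hom_deg_var, of i j] by (simp only: one_add_one)

lemma single_var: "Poly_Mapping.single (Poly_Mapping.single i 1) c = Poly_Mapping.single 0 c * var i"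
  unfolding var_def by (simp add: mult_single)

lemma lin_eq: "lin a = (\<Sum>i\<in>UNIV. Poly_Mapping.single 0 (a $ i) * var i)"
  unfolding lin_def by (simp only: single_var)

lemma hom_deg_lin: "hom_deg 1 (lin a)"
  unfolding lin_eq by (intro hom_deg_sum hom_deg_scal hom_deg_var) auto

lemma poly_expand: "c = (\<Sum>m\<in>Poly_Mapping.keys c. Poly_Mapping.single m (Poly_Mapping.lookup c m))"
proof (rule poly_mapping_eqI)
  fix k
  show "Poly_Mapping.lookup c k = Poly_Mapping.lookup (\<Sum>m\<in>Poly_Mapping.keys c. Poly_Mapping.single m (Poly_Mapping.lookup c m)) k"
    by (cases "k \<in> Poly_Mapping.keys c") (auto simp: lookup_sum lookup_single when_def in_keys_iff)
qed

definition hp :: "nat \<Rightarrow> 'n::finite mpoly \<Rightarrow> 'n mpoly" where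
  "hp k f = Abs_poly_mapping (\<lambda>m. if mon_deg m = k then Poly_Mapping.lookup f m else 0)"

lemma lookup_hp: "Poly_Mapping.lookup (hp k f) m = (if mon_deg m = k then Poly_Mapping.lookup f m else 0)"
proof -
  have "finite {m. (if mon_deg m = k then Poly_Mapping.lookup f m else 0) \<noteq> 0}"
    by (rule finite_subset[of _ "Poly_Mapping.keys f"]) (auto simp: in_keys_iff)
  then show ?thesis unfolding hp_def by (simp add: Abs_poly_mapping_inverse)
qed

lemma hp_add: "hp k (f + g) = hp k f + hp k g"
  by (rule poly_mapping_eqI) (simp add: lookup_hp lookup_add)

lemma hp_hom: "hom_deg k (hp k f)"
  unfolding hom_deg_def by (auto simp: in_keys_iff lookup_hp split: if_splits)

lemma hp_id: "hom_deg k f \<Longrightarrow> hp k f = f"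
  unfolding hom_deg_def by (intro poly_mapping_eqI) (auto simp: lookup_hp in_keys_iff)

lemma hp_other: "hom_deg d f \<Longrightarrow> d \<noteq> k \<Longrightarrow> hp k f = 0"
  unfolding hom_deg_def by (intro poly_mapping_eqI) (auto simp: lookup_hp in_keys_iff)

lemma ideal_gen_base: "a \<in> A \<Longrightarrow> a \<in> ideal_gen A"
  unfolding ideal_gen_def by (rule CollectI, rule exI[of _ "{a}"], rule exI[of _ "\<lambda>_. 1"]) simp

lemma ideal_gen_zero: "0 \<in> ideal_gen A"
  unfolding ideal_gen_def by (rule CollectI, rule exI[of _ "{}"]) simp

lemma ideal_gen_add: "f \<in> ideal_gen A \<Longrightarrow> g \<in> ideal_gen A \<Longrightarrow> f + g \<in> ideal_gen A"
proof -
  assume "f \<in> ideal_gen A" "g \<in> ideal_gen A"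
  then obtain F c G d where F: "finite F" "F \<subseteq> A" "f = (\<Sum>a\<in>F. c a * a)"
    and G: "finite G" "G \<subseteq> A" "g = (\<Sum>a\<in>G. d a * a)"
    unfolding ideal_gen_def by blast
  define e where "e a = (if a \<in> F then c a else 0) + (if a \<in> G then d a else 0)" for a
  have "(\<Sum>a\<in>F \<union> G. e a * a) = (\<Sum>a\<in>F \<union> G. (if a \<in> F then c a * a else 0) + (if a \<in> G then d a * a else 0))"
    by (rule sum.cong) (auto simp: e_def distrib_right)
  also have "\<dots> = (\<Sum>a\<in>F \<union> G. (if a \<in> F then c a * a else 0)) + (\<Sum>a\<in>F \<union> G. (if a \<in> G then d a * a else 0))"
    by (rule sum.distrib)
  also have "\<dots> = f + g"
  proof -
    have 1: "(\<Sum>a\<in>F \<union> G. (if a \<in> F then c a * a else 0)) = (\<Sum>a\<in>F. c a * a)"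
      by (rule sum.mono_neutral_cong_right) (use F G in auto)
    have 2: "(\<Sum>a\<in>F \<union> G. (if a \<in> G then d a * a else 0)) = (\<Sum>a\<in>G. d a * a)"
      by (rule sum.mono_neutral_cong_right) (use F G in auto)
    show ?thesis using F G 1 2 by simp
  qed
  finally have "f + g = (\<Sum>a\<in>F \<union> G. e a * a)" by simp
  moreover have "finite (F \<union> G)" "F \<union> G \<subseteq> A" using F G by auto
  ultimately show ?thesis unfolding ideal_gen_def
    by (intro CollectI exI[of _ "F \<union> G"] exI[of _ e]) simp
qed

lemma ideal_gen_mult: "f \<in> ideal_gen A \<Longrightarrow> g * f \<in> ideal_gen A"
proof -
  assume "f \<in> ideal_gen A"
  then obtain F c where F: "finite F" "F \<subseteq> A" "f = (\<Sum>a\<in>F. c a * a)"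
    unfolding ideal_gen_def by blast
  have "g * f = (\<Sum>a\<in>F. (g * c a) * a)" using F by (simp add: sum_distrib_left mult.assoc)
  then show ?thesis unfolding ideal_gen_def using F
    by (intro CollectI exI[of _ F] exI[of _ "\<lambda>a. g * c a"]) simp
qed

lemma ideal_gen_sum: "finite S \<Longrightarrow> (\<And>x. x \<in> S \<Longrightarrow> f x \<in> ideal_gen A) \<Longrightarrow> sum f S \<in> ideal_gen A"
  by (induction S rule: finite_induct) (auto intro: ideal_gen_add ideal_gen_zero)

lemma dual2_zero: "dual2 L \<Longrightarrow> L 0 = 0"
  unfolding dual2_def by (metis add_cancel_right_right add_0 hom_deg_0)

lemma dual2_add: "dual2 L \<Longrightarrow> hom_deg 2 f \<Longrightarrow> hom_deg 2 g \<Longrightarrow> L (f + g) = L f + L g"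
  unfolding dual2_def by blast

lemma dual2_scal: "dual2 L \<Longrightarrow> hom_deg 2 f \<Longrightarrow> L (Poly_Mapping.single 0 c * f) = c * L f"
  unfolding dual2_def by blast

lemma dual2_sum: assumes "dual2 L" "finite S" "\<And>x. x \<in> S \<Longrightarrow> hom_deg 2 (f x)" shows "L (sum f S) = (\<Sum>x\<in>S. L (f x))"
  using assms(2,3) by (induction S rule: finite_induct) (auto simp: dual2_zero[OF assms(1)] dual2_add[OF assms(1)] hom_deg_sum)

lemma lin_mult: "lin a * lin b = (\<Sum>i\<in>UNIV. \<Sum>j\<in>UNIV. Poly_Mapping.single 0 (a $ i * b $ j) * (var i * var j))"
  unfolding lin_eq sum_product
  by (intro sum.cong refl) (simp add: mult_single ac_simps)

lemma dual2_lin: "dual2 L \<Longrightarrow> L (lin a * lin b) = (\<Sum>i\<in>UNIV. \<Sum>j\<in>UNIV. a $ i * b $ j * L (var i * var j))"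
  unfolding lin_mult
  by (simp add: dual2_sum hom_deg_sum hom_deg_scal hom_deg_var2 dual2_scal)

lemma dual2_lin_gram: "dual2 L \<Longrightarrow> L (lin a * lin b) = a \<bullet> (gram L *v b)"
  by (simp add: dual2_lin inner_vec_def matrix_vector_mult_def gram_def sum_distrib_left ac_simps)

lemma mon_deg_one: assumes "mon_deg (m::'n::finite \<Rightarrow>\<^sub>0 nat) = 1" shows "\<exists>i. m = Poly_Mapping.single i 1"
proof -
  have s: "(\<Sum>i\<in>UNIV. Poly_Mapping.lookup m i) = 1" using assms by (simp add: mon_deg_def)
  then obtain i where i: "Poly_Mapping.lookup m i \<noteq> 0"
    by (metis (mono_tags, lifting) sum.neutral zero_neq_one)
  have "(\<Sum>j\<in>UNIV. Poly_Mapping.lookup m j) = Poly_Mapping.lookup m i + (\<Sum>j\<in>UNIV - {i}. Poly_Mapping.lookup m j)"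
    by (simp add: sum.remove)
  with s i have a: "Poly_Mapping.lookup m i = 1" and b: "(\<Sum>j\<in>UNIV - {i}. Poly_Mapping.lookup m j) = 0"
    by linarith+
  from b have "\<forall>j. j \<noteq> i \<longrightarrow> Poly_Mapping.lookup m j = 0" by simp
  then have "m = Poly_Mapping.single i 1"
    by (intro poly_mapping_eqI) (auto simp: lookup_single when_def a)
  then show ?thesis by blast
qed

lemma lin_axis: "lin (axis i r) = Poly_Mapping.single (Poly_Mapping.single i 1) r"
proof -
  have eq: "\<And>k. Poly_Mapping.single (Poly_Mapping.single k 1) (axis i r $ k) = (if k = i then Poly_Mapping.single (Poly_Mapping.single i 1) r else 0)"
    by (simp add: axis_def)
  have "lin (axis i r) = (\<Sum>k\<in>UNIV. if k = i then Poly_Mapping.single (Poly_Mapping.single i 1) r else 0)"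
    unfolding lin_def by (rule sum.cong[OF refl]) (rule eq)
  also have "\<dots> = Poly_Mapping.single (Poly_Mapping.single i 1) r" by simp
  finally show ?thesis .
qed

locale vanish =
  fixes L :: "'n::finite mpoly \<Rightarrow> real" and I :: "'n mpoly set" and W :: "(real^'n) set"
  assumes dl: "dual2 L"
    and LI: "\<forall>q\<in>I. hom_deg 2 q \<longrightarrow> L q = 0"
    and hI: "I = ideal_gen (I \<inter> {f. \<exists>d. hom_deg d f})"
    and LW: "\<forall>w\<in>W. gram L *v w = 0"
begin

definition "Zp f \<longleftrightarrow> L (hp 2 f) = 0"

lemma Zp_add: "Zp f \<Longrightarrow> Zp g \<Longrightarrow> Zp (f + g)"
  unfolding Zp_def by (simp add: hp_add dual2_add[OF dl] hp_hom)

lemma Zp_0: "Zp 0"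
proof -
  have "hp 2 0 = (0::'n mpoly)" by (rule hp_id) simp
  then show ?thesis unfolding Zp_def by (simp add: dual2_zero[OF dl])
qed

lemma Zp_sum: "finite S \<Longrightarrow> (\<And>x. x \<in> S \<Longrightarrow> Zp (f x)) \<Longrightarrow> Zp (sum f S)"
  by (induction S rule: finite_induct) (auto intro: Zp_add Zp_0)

lemma Zp_hom: "hom_deg e t \<Longrightarrow> (e = 2 \<Longrightarrow> L t = 0) \<Longrightarrow> Zp t"
  unfolding Zp_def by (cases "e = 2") (auto simp: hp_id hp_other dual2_zero[OF dl])

lemma Zp_expand: assumes "\<And>m r. Zp (Poly_Mapping.single m r * a)" shows "Zp (g * a)"
proof -
  have "g * a = (\<Sum>m\<in>Poly_Mapping.keys g. Poly_Mapping.single m (Poly_Mapping.lookup g m) * a)"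
    by (subst poly_expand[of g]) (simp add: sum_distrib_right)
  then show ?thesis by (simp add: Zp_sum assms)
qed

lemma Zp_lin_term: assumes "w \<in> W" shows "Zp (Poly_Mapping.single m r * lin w)"
proof (rule Zp_hom)
  show "hom_deg (mon_deg m + 1) (Poly_Mapping.single m r * lin w)"
    by (intro hom_deg_mult hom_deg_single hom_deg_lin) simp
  assume "mon_deg m + 1 = 2"
  then obtain i where "m = Poly_Mapping.single i 1" using mon_deg_one by fastforce
  then have "Poly_Mapping.single m r * lin w = lin (axis i r) * lin w" by (simp add: lin_axis)
  then show "L (Poly_Mapping.single m r * lin w) = 0"
    using LW assms by (simp add: dual2_lin_gram[OF dl])
qed

lemma Zp_I_term: assumes "h \<in> I" "hom_deg d h" shows "Zp (Poly_Mapping.single m r * h)"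
proof (rule Zp_hom)
  show "hom_deg (mon_deg m + d) (Poly_Mapping.single m r * h)"
    by (intro hom_deg_mult hom_deg_single assms) simp
  have "Poly_Mapping.single m r * h \<in> I"
    using ideal_gen_mult[of h "I \<inter> {f. \<exists>d. hom_deg d f}"] assms hI by (metis ideal_gen_mult)
  moreover assume "mon_deg m + d = 2"
  ultimately show "L (Poly_Mapping.single m r * h) = 0"
    using LI \<open>hom_deg (mon_deg m + d) _\<close> by simp
qed

lemma Zp_I: assumes "a \<in> I" shows "Zp (g * a)"
proof -
  from assms hI have "a \<in> ideal_gen (I \<inter> {f. \<exists>d. hom_deg d f})" by simp
  then obtain F c where F: "finite F" "F \<subseteq> I \<inter> {f. \<exists>d. hom_deg d f}" "a = (\<Sum>h\<in>F. c h * h)"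
    unfolding ideal_gen_def by blast
  have "g * a = (\<Sum>h\<in>F. (g * c h) * h)" using F by (simp add: sum_distrib_left mult.assoc)
  moreover have "Zp ((g * c h) * h)" if "h \<in> F" for h
  proof -
    from that F obtain d where h: "h \<in> I" and d: "hom_deg d h" by blast
    show ?thesis by (rule Zp_expand, rule Zp_I_term[OF h d])
  qed
  ultimately show ?thesis using F by (simp add: Zp_sum)
qed

lemma vanish_main: assumes "f \<in> ideal_gen (lin ` W \<union> I)" "hom_deg 2 f" shows "L f = 0"
proof -
  from assms obtain F c where F: "finite F" "F \<subseteq> lin ` W \<union> I" "f = (\<Sum>a\<in>F. c a * a)"
    unfolding ideal_gen_def by blast
  have "Zp (c a * a)" if "a \<in> F" for a
  proof -
    from that F have "a \<in> lin ` W \<or> a \<in> I" by blast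
    then show ?thesis
    proof
      assume "a \<in> lin ` W"
      then obtain w where "w \<in> W" "a = lin w" by blast
      then show ?thesis by (metis Zp_expand Zp_lin_term)
    qed (rule Zp_I)
  qed
  then have "Zp f" using F by (simp add: Zp_sum)
  then show ?thesis unfolding Zp_def using hp_id[OF assms(2)] by simp
qed

end

lemma lookup_scal: "Poly_Mapping.lookup (Poly_Mapping.single 0 r * f) m = r * Poly_Mapping.lookup f m"
  by (simp add: mult_map_scale_conv_mult[symmetric] Poly_Mapping.map.rep_eq when_def)

lemma keys_scal: "Poly_Mapping.keys (Poly_Mapping.single 0 r * f) \<subseteq> Poly_Mapping.keys f"
  by (auto simp: in_keys_iff lookup_scal)

definition mono :: "('n::finite \<Rightarrow> complex) \<Rightarrow> ('n \<Rightarrow>\<^sub>0 nat) \<Rightarrow> complex" where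
  "mono z m = (\<Prod>i\<in>UNIV. z i ^ Poly_Mapping.lookup m i)"

lemma mono_add: "mono z (a + b) = mono z a * mono z b"
  unfolding mono_def by (simp add: lookup_add power_add prod.distrib)

lemma mono_single: "mono z (Poly_Mapping.single i 1) = z i"
proof -
  have "\<And>k. z k ^ Poly_Mapping.lookup (Poly_Mapping.single i 1) k = (if k = i then z i else 1)"
    by (auto simp: lookup_single when_def)
  then show ?thesis unfolding mono_def by (simp add: prod.delta)
qed

lemma mono_single': "mono z (Poly_Mapping.single i (Suc 0)) = z i"
  using mono_single[of z i] by simp

lemma ceval_superset: "finite S \<Longrightarrow> Poly_Mapping.keys f \<subseteq> S \<Longrightarrow>
   ceval f z = (\<Sum>m\<in>S. complex_of_real (Poly_Mapping.lookup f m) * mono z m)"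
  unfolding ceval_def mono_def
  by (rule sum.mono_neutral_left) (auto simp: in_keys_iff)

lemma ceval_add: "ceval (f + g) z = ceval f z + ceval g z"
proof -
  let ?S = "Poly_Mapping.keys f \<union> Poly_Mapping.keys g"
  have "ceval (f + g) z = (\<Sum>m\<in>?S. complex_of_real (Poly_Mapping.lookup (f+g) m) * mono z m)"
    by (rule ceval_superset) (auto dest: keys_add[THEN subsetD])
  also have "\<dots> = ceval f z + ceval g z"
    by (simp add: ceval_superset[of ?S f] ceval_superset[of ?S g] lookup_add distrib_right sum.distrib)
  finally show ?thesis .
qed

lemma ceval_zero: "ceval 0 z = 0"
  by (simp add: ceval_def)

lemma ceval_sum: "finite S \<Longrightarrow> ceval (sum f S) z = (\<Sum>x\<in>S. ceval (f x) z)"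
  by (induction S rule: finite_induct) (auto simp: ceval_add ceval_zero)

lemma ceval_single: "ceval (Poly_Mapping.single m c) z = complex_of_real c * mono z m"
  by (subst ceval_superset[of "{m}"]) auto

lemma ceval_lin: "ceval (lin a) z = (\<Sum>i\<in>UNIV. complex_of_real (a $ i) * z i)"
  unfolding lin_def by (simp add: ceval_sum ceval_single mono_single mono_single')

definition phi :: "complex \<Rightarrow> ('n::finite \<Rightarrow> complex) \<Rightarrow> 'n mpoly \<Rightarrow> real" where
  "phi c z f = (if hom_deg 2 f then (\<Sum>m\<in>Poly_Mapping.keys f. Poly_Mapping.lookup f m * Re (c * mono z m)) else 0)"

lemma phi_superset: "hom_deg 2 f \<Longrightarrow> finite S \<Longrightarrow> Poly_Mapping.keys f \<subseteq> S \<Longrightarrow>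
   phi c z f = (\<Sum>m\<in>S. Poly_Mapping.lookup f m * Re (c * mono z m))"
  unfolding phi_def by simp (rule sum.mono_neutral_left, auto simp: in_keys_iff)

lemma phi_dual2: "dual2 (phi c z)"
  unfolding dual2_def
proof (intro conjI allI impI)
  fix f g :: "'a mpoly" assume f: "hom_deg 2 f" and g: "hom_deg 2 g"
  let ?S = "Poly_Mapping.keys f \<union> Poly_Mapping.keys g"
  show "phi c z (f + g) = phi c z f + phi c z g"
    using keys_add[of f g]
    by (simp add: phi_superset[of _ ?S] f g hom_deg_add lookup_add distrib_right sum.distrib)
next
  fix r and f :: "'a mpoly" assume f: "hom_deg 2 f"
  show "phi c z (Poly_Mapping.single 0 r * f) = r * phi c z f"
    using keys_scal[of r f]
    by (simp add: phi_superset[of _ "Poly_Mapping.keys f"] f hom_deg_scal lookup_scal sum_distrib_left mult.assoc)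
next
  fix f :: "'a mpoly" assume "\<not> hom_deg 2 f" then show "phi c z f = 0" by (simp add: phi_def)
qed

lemma phi_ceval: assumes "hom_deg 2 f" shows "phi c z f = Re (c * ceval f z)"
proof -
  have "c * ceval f z = (\<Sum>m\<in>Poly_Mapping.keys f. complex_of_real (Poly_Mapping.lookup f m) * (c * mono z m))"
    by (simp add: ceval_def mono_def sum_distrib_left ac_simps)
  then show ?thesis using assms by (simp add: phi_def Re_sum)
qed

lemma var_mult: "var i * var j = Poly_Mapping.single (Poly_Mapping.single i 1 + Poly_Mapping.single j 1) 1"
  unfolding var_def by (simp add: mult_single)

lemma gram_phi: "gram (phi c z) $ i $ j = Re (c * z i * z j)"
proof -
  have "phi c z (var i * var j) = Re (c * z i * z j)"
    using hom_deg_var2[of i j] unfolding var_mult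
    by (simp add: phi_superset[of _ "{Poly_Mapping.single i 1 + Poly_Mapping.single j 1}"] mono_add mono_single mono_single' mult.assoc)
  then show ?thesis by (simp add: gram_def)
qed

lemma dual2_comb: "dual2 L \<Longrightarrow> dual2 M \<Longrightarrow> dual2 (\<lambda>f. \<alpha> * L f + \<beta> * M f)"
  unfolding dual2_def by (simp add: algebra_simps)

lemma gram_sym: "transpose (gram L) = gram L"
  by (simp add: transpose_def gram_def mult.commute vec_eq_iff)

lemma sym_inner: fixes G :: "real^'n::finite^'n"
  assumes "transpose G = G" shows "x \<bullet> (G *v y) = (G *v x) \<bullet> y"
proof -
  have "x \<bullet> (G *v y) = (x v* G) \<bullet> y" by (simp add: dot_lmul_matrix)
  also have "x v* G = transpose G *v x" by simp
  finally show ?thesis using assms by simp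
qed

lemma quad_discr: fixes A b C :: real
  assumes "\<And>t. C + 2 * t * b + t * t * A \<ge> 0" "A \<ge> 0"
  shows "b * b \<le> A * C"
proof (cases "A = 0")
  case True
  show ?thesis
  proof (rule ccontr)
    assume "\<not> ?thesis"
    then have "b \<noteq> 0" using True by (cases "b = 0") auto
    have "C + 2 * (- (C + 1) / (2 * b)) * b + (- (C + 1) / (2 * b)) * (- (C + 1) / (2 * b)) * A \<ge> 0"
      by (rule assms(1))
    with \<open>b \<noteq> 0\<close> True show False by (simp add: field_simps)
  qed
next
  case False
  then have Ap: "A > 0" using assms(2) by simp
  have "C + 2 * (- b / A) * b + (- b / A) * (- b / A) * A \<ge> 0" by (rule assms(1))
  then have "C - b * b / A \<ge> 0" using Ap by (simp add: field_simps power2_eq_square)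
  then show ?thesis using Ap by (simp add: field_simps)
qed

lemma psd_cs: fixes G :: "real^'n::finite^'n"
  assumes sym: "transpose G = G" and psd: "\<And>a. a \<bullet> (G *v a) \<ge> 0"
  shows "(v \<bullet> (G *v a)) * (v \<bullet> (G *v a)) \<le> (a \<bullet> (G *v a)) * (v \<bullet> (G *v v))"
proof (rule quad_discr)
  fix t :: real
  have "0 \<le> (v + t *\<^sub>R a) \<bullet> (G *v (v + t *\<^sub>R a))" by (rule psd)
  also have "\<dots> = v \<bullet> (G *v v) + 2 * t * (v \<bullet> (G *v a)) + t * t * (a \<bullet> (G *v a))"
    using sym_inner[OF sym, of a v]
    by (simp add: matrix_vector_right_distrib matrix_vector_mult_scaleR inner_add_left inner_add_right algebra_simps inner_commute)
  finally show "0 \<le> v \<bullet> (G *v v) + 2 * t * (v \<bullet> (G *v a)) + t * t * (a \<bullet> (G *v a))" .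
qed (rule psd)

lemma null_orth: fixes G :: "real^'n::finite^'n"
  assumes sym: "transpose G = G"
  shows "{y. \<forall>x\<in>range ((*v) G). orthogonal x y} = {w. G *v w = 0}"
proof (intro set_eqI iffI; simp)
  fix y assume h: "\<forall>x. orthogonal (G *v x) y"
  have "orthogonal (G *v (G *v y)) y" using h by blast
  then have "(G *v y) \<bullet> (G *v y) = 0" using sym_inner[OF sym, of "G *v y" y] by (simp add: orthogonal_def inner_commute)
  then show "G *v y = 0" by simp
next
  fix y assume "G *v y = 0"
  then show "\<forall>x. orthogonal (G *v x) y" using sym_inner[OF sym] by (simp add: orthogonal_def inner_commute)
qed

lemma subspace_range_mat: "subspace (range ((*v) (G::real^'n::finite^'m::finite)))"
  unfolding subspace_def
proof (intro conjI ballI allI)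
  show "0 \<in> range ((*v) G)" by (metis matrix_vector_mult_0_right rangeI)
next
  fix x y assume "x \<in> range ((*v) G)" "y \<in> range ((*v) G)"
  then obtain a b where "x = G *v a" "y = G *v b" by blast
  then have "x + y = G *v (a + b)" by (simp add: matrix_vector_right_distrib)
  then show "x + y \<in> range ((*v) G)" by blast
next
  fix c :: real and x assume "x \<in> range ((*v) G)"
  then obtain a where "x = G *v a" by blast
  then have "c *\<^sub>R x = G *v (c *\<^sub>R a)" by (simp add: matrix_vector_mult_scaleR)
  then show "c *\<^sub>R x \<in> range ((*v) G)" by blast
qed

lemma null_dim: fixes G :: "real^'n::finite^'n"
  assumes sym: "transpose G = G"
  shows "dim {w. G *v w = 0} + rank G = CARD('n)"
proof -
  have "dim {y \<in> UNIV. \<forall>x\<in>range ((*v) G). orthogonal x y} + dim (range ((*v) G)) = dim (UNIV :: (real^'n) set)"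
    by (rule dim_subspace_orthogonal_to_vectors) (auto intro: subspace_range_mat subspace_UNIV)
  then show ?thesis using null_orth[OF sym] by (simp add: rank_dim_range)
qed

lemma orth_range: fixes G :: "real^'n::finite^'n"
  assumes sym: "transpose G = G" and x: "\<And>w. G *v w = 0 \<Longrightarrow> x \<bullet> w = 0"
  shows "\<exists>v. x = G *v v"
proof -
  obtain y z where y: "y \<in> span (range ((*v) G))" and z: "\<And>w. w \<in> span (range ((*v) G)) \<Longrightarrow> orthogonal z w"
    and xyz: "x = y + z"
    by (rule orthogonal_subspace_decomp_exists[of "range ((*v) G)" x]) blast
  have sp: "span (range ((*v) G)) = range ((*v) G)" by (rule span_eq_iff[THEN iffD2, OF subspace_range_mat])
  have "orthogonal (G *v v) z" for v
  proof -
    have "orthogonal z (G *v v)" using z[of "G *v v"] sp by simp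
    then show ?thesis by (simp add: orthogonal_def inner_commute)
  qed
  then have "z \<in> {y. \<forall>x\<in>range ((*v) G). orthogonal x y}" by auto
  then have "G *v z = 0" using null_orth[OF sym] by blast
  then have "x \<bullet> z = 0" by (rule x)
  moreover have "y \<bullet> z = 0" using z[OF y] by (simp add: orthogonal_def inner_commute)
  ultimately have "z \<bullet> z = 0" using xyz by (simp add: inner_add_left)
  then have "x = y" using xyz by simp
  then show ?thesis using y sp by auto
qed

lemma cone_psd: "L \<in> hankel_cone I \<Longrightarrow> a \<bullet> (gram L *v a) \<ge> 0"
  unfolding hankel_cone_def using dual2_lin_gram by fastforce

lemma phi_lin_sq: "phi c z (lin a * lin a) = Re (c * (\<Sum>i\<in>UNIV. complex_of_real (a $ i) * z i) * (\<Sum>i\<in>UNIV. complex_of_real (a $ i) * z i))"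
proof -
  have "phi c z (lin a * lin a) = (\<Sum>i\<in>UNIV. \<Sum>j\<in>UNIV. a $ i * a $ j * Re (c * z i * z j))"
    using dual2_lin[OF phi_dual2, of c z a a] gram_phi[of c z] by (simp add: gram_def)
  also have "\<dots> = Re (c * (\<Sum>i\<in>UNIV. \<Sum>j\<in>UNIV. complex_of_real (a $ i) * z i * (complex_of_real (a $ j) * z j)))"
  proof -
    have t: "a $ i * a $ j * Re (c * z i * z j) = Re (c * (complex_of_real (a $ i) * z i * (complex_of_real (a $ j) * z j)))" for i j
      by (simp add: algebra_simps)
    show ?thesis by (simp only: t sum_distrib_left Re_sum)
  qed
  also have "\<dots> = Re (c * (\<Sum>i\<in>UNIV. complex_of_real (a $ i) * z i) * (\<Sum>i\<in>UNIV. complex_of_real (a $ i) * z i))"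
    by (simp add: sum_product mult.assoc)
  finally show ?thesis .
qed

lemma perturb:
  assumes ext: "extreme_ray (hankel_cone I) L" and zI: "z \<in> cpoints I"
    and zW: "\<And>w. gram L *v w = 0 \<Longrightarrow> (\<Sum>i\<in>UNIV. complex_of_real (w $ i) * z i) = 0"
  shows "\<exists>\<mu>. \<forall>f. phi c z f = \<mu> * L f"
proof -
  define G where "G = gram L"
  have Lc: "L \<in> hankel_cone I" using ext by (simp add: extreme_ray_def)
  then have dl: "dual2 L" and LI: "\<forall>q\<in>I. hom_deg 2 q \<longrightarrow> L q = 0" by (auto simp: hankel_cone_def)
  have psd: "\<And>a. a \<bullet> (G *v a) \<ge> 0" unfolding G_def using cone_psd[OF Lc] .
  have sym: "transpose G = G" unfolding G_def by (rule gram_sym)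
  define x where "x = (\<chi> i. Re (z i))"
  define y where "y = (\<chi> i. Im (z i))"
  have sRe: "Re (\<Sum>i\<in>UNIV. complex_of_real (a $ i) * z i) = x \<bullet> a" for a
    by (simp add: x_def inner_vec_def Re_sum mult.commute)
  have sIm: "Im (\<Sum>i\<in>UNIV. complex_of_real (a $ i) * z i) = y \<bullet> a" for a
    by (simp add: y_def inner_vec_def Im_sum mult.commute)
  obtain v1 where v1: "x = G *v v1"
    using orth_range[OF sym, of x] zW sRe unfolding G_def by (metis zero_complex.simps(1))
  obtain v2 where v2: "y = G *v v2"
    using orth_range[OF sym, of y] zW sIm unfolding G_def by (metis zero_complex.simps(2))
  define K where "K = v1 \<bullet> (G *v v1) + v2 \<bullet> (G *v v2)"
  have K0: "K \<ge> 0" unfolding K_def using psd by (simp add: add_nonneg_nonneg)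
  have bound: "\<bar>phi c z (lin a * lin a)\<bar> \<le> cmod c * K * (a \<bullet> (G *v a))" for a
  proof -
    define s where "s = (\<Sum>i\<in>UNIV. complex_of_real (a $ i) * z i)"
    have "\<bar>phi c z (lin a * lin a)\<bar> = \<bar>Re (c * s * s)\<bar>" by (simp add: phi_lin_sq s_def)
    also have "\<dots> \<le> cmod (c * s * s)" by (rule abs_Re_le_cmod)
    also have "\<dots> = cmod c * ((Re s)\<^sup>2 + (Im s)\<^sup>2)" 
    proof -
      have "cmod (c * s * s) = cmod c * (cmod s)\<^sup>2" by (simp add: norm_mult power2_eq_square)
      then show ?thesis by (simp only: cmod_power2)
    qed
    also have "(Re s)\<^sup>2 = (v1 \<bullet> (G *v a)) * (v1 \<bullet> (G *v a))"
    proof -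
      have "Re s = x \<bullet> a" unfolding s_def by (rule sRe)
      also have "\<dots> = v1 \<bullet> (G *v a)" using sym_inner[OF sym, of v1 a] v1 by simp
      finally show ?thesis by (simp add: power2_eq_square)
    qed
    also have "(Im s)\<^sup>2 = (v2 \<bullet> (G *v a)) * (v2 \<bullet> (G *v a))"
    proof -
      have "Im s = y \<bullet> a" unfolding s_def by (rule sIm)
      also have "\<dots> = v2 \<bullet> (G *v a)" using sym_inner[OF sym, of v2 a] v2 by simp
      finally show ?thesis by (simp add: power2_eq_square)
    qed
    also have "cmod c * ((v1 \<bullet> (G *v a)) * (v1 \<bullet> (G *v a)) + (v2 \<bullet> (G *v a)) * (v2 \<bullet> (G *v a)))
       \<le> cmod c * ((a \<bullet> (G *v a)) * (v1 \<bullet> (G *v v1)) + (a \<bullet> (G *v a)) * (v2 \<bullet> (G *v v2)))"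
      by (intro mult_left_mono add_mono psd_cs[OF sym psd]) simp
    also have "\<dots> = cmod c * K * (a \<bullet> (G *v a))" by (simp add: K_def algebra_simps)
    finally show ?thesis .
  qed
  define \<epsilon> where "\<epsilon> = 1 / (cmod c * K + 1)"
  have ep: "\<epsilon> > 0" 
  proof -
    have "0 \<le> cmod c * K" using K0 by simp
    then show ?thesis unfolding \<epsilon>_def by simp
  qed
  have epb: "\<epsilon> * (cmod c * K) \<le> 1"
  proof -
    have "0 \<le> cmod c * K" using K0 by simp
    then show ?thesis unfolding \<epsilon>_def by (simp add: field_simps)
  qed
  have small: "\<epsilon> * \<bar>phi c z (lin a * lin a)\<bar> \<le> a \<bullet> (G *v a)" for a
  proof -
    have "\<epsilon> * \<bar>phi c z (lin a * lin a)\<bar> \<le> \<epsilon> * (cmod c * K * (a \<bullet> (G *v a)))"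
      using bound[of a] ep by (simp add: mult_left_mono)
    also have "\<dots> = (\<epsilon> * (cmod c * K)) * (a \<bullet> (G *v a))" by simp
    also have "\<dots> \<le> 1 * (a \<bullet> (G *v a))" by (rule mult_right_mono[OF epb psd])
    finally show ?thesis by simp
  qed
  have phiI: "\<forall>q\<in>I. hom_deg 2 q \<longrightarrow> phi c z q = 0"
    using zI by (simp add: cpoints_def phi_ceval)
  have LG: "L (lin a * lin a) = a \<bullet> (G *v a)" for a unfolding G_def by (rule dual2_lin_gram[OF dl])
  define L1 where "L1 = (\<lambda>f. (1/2) * L f + (\<epsilon>/2) * phi c z f)"
  define L2 where "L2 = (\<lambda>f. (1/2) * L f + (-\<epsilon>/2) * phi c z f)"
  have L1c: "L1 \<in> hankel_cone I"
    unfolding hankel_cone_def L1_def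
  proof (intro CollectI conjI allI ballI impI)
    show "dual2 (\<lambda>f. 1 / 2 * L f + \<epsilon> / 2 * phi c z f)" by (rule dual2_comb[OF dl phi_dual2])
    fix a
    have "\<epsilon> * (- phi c z (lin a * lin a)) \<le> \<epsilon> * \<bar>phi c z (lin a * lin a)\<bar>"
      by (rule mult_left_mono) (use ep in auto)
    then show "0 \<le> 1 / 2 * L (lin a * lin a) + \<epsilon> / 2 * phi c z (lin a * lin a)"
      using small[of a] by (simp add: LG)
  next
    fix q assume "q \<in> I" "hom_deg 2 q" then show "1 / 2 * L q + \<epsilon> / 2 * phi c z q = 0"
      using LI phiI by simp
  qed
  have L2c: "L2 \<in> hankel_cone I"
    unfolding hankel_cone_def L2_def
  proof (intro CollectI conjI allI ballI impI)
    show "dual2 (\<lambda>f. 1 / 2 * L f + - \<epsilon> / 2 * phi c z f)" by (rule dual2_comb[OF dl phi_dual2])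
    fix a
    have "\<epsilon> * phi c z (lin a * lin a) \<le> \<epsilon> * \<bar>phi c z (lin a * lin a)\<bar>"
      by (rule mult_left_mono) (use ep in auto)
    then show "0 \<le> 1 / 2 * L (lin a * lin a) + - \<epsilon> / 2 * phi c z (lin a * lin a)"
      using small[of a] by (simp add: LG)
  next
    fix q assume "q \<in> I" "hom_deg 2 q" then show "1 / 2 * L q + - \<epsilon> / 2 * phi c z q = 0"
      using LI phiI by simp
  qed
  have "L = (\<lambda>x. L1 x + L2 x)" by (simp add: L1_def L2_def fun_eq_iff field_simps)
  then obtain k where "L1 = (\<lambda>x. k * L x)" using ext L1c L2c unfolding extreme_ray_def by blast
  then have "\<forall>f. (1/2) * L f + (\<epsilon>/2) * phi c z f = k * L f" by (simp add: L1_def fun_eq_iff)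
  then have "\<forall>f. phi c z f = ((2 * k - 1) / \<epsilon>) * L f" using ep by (simp add: field_simps)
  then show ?thesis by blast
qed

lemma rank_le1: fixes G :: "real^'n::finite^'n" and z :: "'n \<Rightarrow> complex"
  assumes h: "\<And>i j. z i * z j = \<gamma> * complex_of_real (G $ i $ j)" and nz: "z \<noteq> (\<lambda>_. 0)"
  shows "rank G \<le> 1"
proof -
  obtain i0 where i0: "z i0 \<noteq> 0" using nz by blast
  define g0 where "g0 = G $ i0 $ i0"
  have "z i0 * z i0 \<noteq> 0" using i0 by simp
  then have ne: "\<gamma> * complex_of_real g0 \<noteq> 0" using h[of i0 i0] unfolding g0_def by metis
  then have gn: "\<gamma> \<noteq> 0" by auto
  from ne have g0n: "g0 \<noteq> 0" by auto
  have fact: "G $ i $ j * g0 = G $ i $ i0 * G $ j $ i0" for i j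
  proof -
    have "\<gamma> * \<gamma> * complex_of_real (G $ i $ j * g0) = (z i * z j) * (z i0 * z i0)"
      by (simp add: h g0_def)
    also have "\<dots> = (z i * z i0) * (z j * z i0)" by (simp add: ac_simps)
    also have "\<dots> = \<gamma> * \<gamma> * complex_of_real (G $ i $ i0 * G $ j $ i0)" by (simp add: h)
    finally have "complex_of_real (G $ i $ j * g0) = complex_of_real (G $ i $ i0 * G $ j $ i0)"
      using gn by simp
    then show ?thesis by (simp only: of_real_eq_iff)
  qed
  define col where "col = (\<chi> i. G $ i $ i0)"
  have "G *v v = ((\<Sum>j\<in>UNIV. G $ j $ i0 * v $ j) / g0) *\<^sub>R col" for v
  proof -
    have "(G *v v) $ i = ((\<Sum>j\<in>UNIV. G $ j $ i0 * v $ j) / g0) * G $ i $ i0" for i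
    proof -
      have "(G *v v) $ i = (\<Sum>j\<in>UNIV. G $ i $ j * v $ j)" by (simp add: matrix_vector_mult_def)
      also have "\<dots> = (\<Sum>j\<in>UNIV. (G $ i $ i0 * G $ j $ i0 / g0) * v $ j)"
        using fact g0n by (intro sum.cong refl) (simp add: eq_divide_eq)
      also have "\<dots> = ((\<Sum>j\<in>UNIV. G $ j $ i0 * v $ j) / g0) * G $ i $ i0"
        by (simp add: sum_distrib_left sum_divide_distrib ac_simps)
      finally show ?thesis .
    qed
    then show ?thesis by (simp add: vec_eq_iff col_def)
  qed
  then have "range ((*v) G) \<subseteq> span {col}" by (auto intro: span_scale[OF span_base[OF singletonI]])
  then have "dim (range ((*v) G)) \<le> card {col}" by (intro dim_le_card) auto
  then show ?thesis by (simp add: rank_dim_range)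
qed

lemma no_small:
  fixes I :: "'n::finite mpoly set"
  assumes hom: "homogeneous_ideal I" and bpf: "p_bpf p I" and ext: "extreme_ray (hankel_cone I) L"
    and r1: "1 < hank_rank L" and rp: "hank_rank L \<le> p"
  shows False
proof -
  define G where "G = gram L"
  define W where "W = {w. G *v w = 0}"
  have Lc: "L \<in> hankel_cone I" and Lnz: "L \<noteq> (\<lambda>_. 0)" using ext by (auto simp: extreme_ray_def)
  then have dl: "dual2 L" and LI: "\<forall>q\<in>I. hom_deg 2 q \<longrightarrow> L q = 0" by (auto simp: hankel_cone_def)
  have sym: "transpose G = G" unfolding G_def by (rule gram_sym)
  have sub: "subspace W" unfolding W_def subspace_def
    by (simp add: matrix_vector_right_distrib matrix_vector_mult_scaleR)
  have "dim W + rank G = CARD('n)" unfolding W_def by (rule null_dim[OF sym])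
  then have codim: "CARD('n) - dim W \<le> p" using rp by (simp add: hank_rank_def G_def)
  show False
  proof (cases "base_point_free I W")
    case True
    with bpf sub codim have all: "\<forall>f. hom_deg 2 f \<longrightarrow> f \<in> ideal_gen (lin ` W \<union> I)"
      unfolding p_bpf_def by blast
    interpret v: vanish L I W
      by unfold_locales (use dl LI hom in \<open>auto simp: homogeneous_ideal_def W_def G_def\<close>)
    have "L f = 0" for f
    proof (cases "hom_deg 2 f")
      case True then show ?thesis using all v.vanish_main by blast
    next
      case False then show ?thesis using dl by (simp add: dual2_def)
    qed
    then show False using Lnz by auto
  next
    case False
    then obtain z where zI: "z \<in> cpoints I" and zW: "\<forall>a\<in>W. ceval (lin a) z = 0"
      unfolding base_point_free_def by blast
    have zW': "\<And>w. gram L *v w = 0 \<Longrightarrow> (\<Sum>i\<in>UNIV. complex_of_real (w $ i) * z i) = 0"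
      using zW by (simp add: W_def G_def ceval_lin)
    obtain \<mu>1 where m1: "\<forall>f. phi 1 z f = \<mu>1 * L f" using perturb[OF ext zI zW'] by blast
    obtain \<mu>2 where m2: "\<forall>f. phi (- \<i>) z f = \<mu>2 * L f" using perturb[OF ext zI zW'] by blast
    have e1: "Re (z i * z j) = \<mu>1 * G $ i $ j" for i j
      using gram_phi[of 1 z i j] m1 by (simp add: gram_def G_def)
    have e2: "Im (z i * z j) = \<mu>2 * G $ i $ j" for i j
      using gram_phi[of "- \<i>" z i j] m2 by (simp add: gram_def G_def)
    have "z i * z j = Complex \<mu>1 \<mu>2 * complex_of_real (G $ i $ j)" for i j
      using e1[of i j] e2[of i j] by (intro complex_eqI) simp_all
    moreover have "z \<noteq> (\<lambda>_. 0)" using zI by (simp add: cpoints_def)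
    ultimately have "rank G \<le> 1" by (rule rank_le1)
    then show False using r1 by (simp add: hank_rank_def G_def)
  qed
qed

theorem theorem2p2:
  fixes I :: "'n::finite mpoly set" and p :: nat
  assumes "homogeneous_ideal I" and "saturated I"
    and "nondegenerate I"
    and "p \<ge> 1"
    and "p_bpf p I"
  shows "hankel_index I \<ge> enat (p + 1)"
proof (cases "\<exists>L. extreme_ray (hankel_cone I) L \<and> hank_rank L > 1")
  case True
  define P where "P r \<longleftrightarrow> r > 1 \<and> (\<exists>L. extreme_ray (hankel_cone I) L \<and> hank_rank L = r)" for r
  have "\<exists>r. P r" using True by (auto simp: P_def)
  then have "P (LEAST r. P r)" by (rule LeastI_ex)
  then obtain L where "extreme_ray (hankel_cone I) L" "hank_rank L = (LEAST r. P r)" "1 < (LEAST r. P r)"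
    by (auto simp: P_def)
  then have "p + 1 \<le> (LEAST r. P r)" using no_small[OF assms(1) assms(5)] by force
  then show ?thesis using True unfolding hankel_index_def P_def by simp
next
  case False
  then have "hankel_index I = \<infinity>" unfolding hankel_index_def by (rule if_not_P)
  then show ?thesis by simp
qed


end
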